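(* Let $n\ge2$ and let $f(u)=\sum_{l=0}^\infty a_l(u-u_0)^l$ be a power series in the polar $n$-complex variable $u$, with polar $n$-complex coefficients $a_l$ and center $u_0$, converging absolutely on an open set $U\subseteq\mathbb{R}^n$ (identifying $u$ with $(x_0,\dots,x_{n-1})$). Write $f(u)=\sum_{k=0}^{n-1}h_kP_k(x_0,\dots,x_{n-1})$ with real functions $P_k$. Then on $U$, for every $k\in\{0,\dots,n-1\}$, $$\frac{\partial P_k}{\partial x_0}=\frac{\partial P_{k+1}}{\partial x_1}=\cdots=\frac{\partial P_{n-1}}{\partial x_{n-k-1}}=\frac{\partial P_0}{\partial x_{n-k}}=\cdots=\frac{\partial P_{k-1}}{\partial x_{n-1}},$$ i.e. $\partial P_{(k+j)\bmod n}/\partial x_j$ does not depend on $j\in\{0,\dots,n-1\}$.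
   Context: Polar $n$-complex numbers: $u=x_0+h_1x_1+\cdots+h_{n-1}x_{n-1}$, $x_j\in\mathbb{R}$, $h_0=1$, componentwise addition, bilinear multiplication $h_jh_k=h_{(j+k)\bmod n}$. *)

theory Defs
  imports "HOL-Analysis.Analysis"
begin

text \<open>Polar n-complex numbers u = x_0 + h_1 x_1 + ... + h_(n-1) x_(n-1) are represented
  by their component functions x :: nat => real, with x i = 0 for i >= n.
  The carrier is identified with R^n; we use the product topology on nat => real,
  restricted to this carrier (which is the Euclidean topology of R^n).\<close>

definition ncx :: "nat \<Rightarrow> (nat \<Rightarrow> real) set" where
  "ncx n = {x. \<forall>i\<ge>n. x i = 0}"

definition nadd :: "nat \<Rightarrow> (nat \<Rightarrow> real) \<Rightarrow> (nat \<Rightarrow> real) \<Rightarrow> (nat \<Rightarrow> real)" where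
  "nadd n x y = (\<lambda>i. if i < n then x i + y i else 0)"

definition nsub :: "nat \<Rightarrow> (nat \<Rightarrow> real) \<Rightarrow> (nat \<Rightarrow> real) \<Rightarrow> (nat \<Rightarrow> real)" where
  "nsub n x y = (\<lambda>i. if i < n then x i - y i else 0)"

text \<open>Bilinear multiplication with h_j h_l = h_((j+l) mod n).\<close>
definition nmul :: "nat \<Rightarrow> (nat \<Rightarrow> real) \<Rightarrow> (nat \<Rightarrow> real) \<Rightarrow> (nat \<Rightarrow> real)" where
  "nmul n x y = (\<lambda>k. if k < n then
      (\<Sum>j<n. \<Sum>l<n. if (j + l) mod n = k then x j * y l else 0) else 0)"

definition none :: "nat \<Rightarrow> (nat \<Rightarrow> real)" where
  "none n = (\<lambda>i. if i = 0 then 1 else 0)"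

fun npow :: "nat \<Rightarrow> (nat \<Rightarrow> real) \<Rightarrow> nat \<Rightarrow> (nat \<Rightarrow> real)" where
  "npow n u 0 = none n"
| "npow n u (Suc m) = nmul n u (npow n u m)"

definition nnorm :: "nat \<Rightarrow> (nat \<Rightarrow> real) \<Rightarrow> real" where
  "nnorm n x = sqrt (\<Sum>i<n. (x i)\<^sup>2)"

definition pterm :: "nat \<Rightarrow> (nat \<Rightarrow> nat \<Rightarrow> real) \<Rightarrow> (nat \<Rightarrow> real) \<Rightarrow> (nat \<Rightarrow> real) \<Rightarrow> nat \<Rightarrow> (nat \<Rightarrow> real)" where
  "pterm n a u0 u l = nmul n (a l) (npow n (nsub n u u0) l)"

definition Pcomp :: "nat \<Rightarrow> (nat \<Rightarrow> nat \<Rightarrow> real) \<Rightarrow> (nat \<Rightarrow> real) \<Rightarrow> nat \<Rightarrow> (nat \<Rightarrow> real) \<Rightarrow> real" where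
  "Pcomp n a u0 k u = (\<Sum>l. pterm n a u0 u l k)"

end

theory Submission
  imports Defs
begin


definition om :: "nat \<Rightarrow> complex" where "om n = exp (2 * of_real pi * \<i> / of_nat n)"

definition chi :: "nat \<Rightarrow> nat \<Rightarrow> (nat \<Rightarrow> real) \<Rightarrow> complex" where
  "chi n m x = (\<Sum>i<n. of_real (x i) * om n ^ (m * i))"

lemma om_pow_n: "n > 0 \<Longrightarrow> om n ^ n = 1"
  unfolding om_def by (simp flip: exp_of_nat_mult)

lemma om_pow_mod: assumes "n > 0" shows "om n ^ a = om n ^ (a mod n)"
proof -
  have "om n ^ a = om n ^ (n * (a div n) + a mod n)" by simp
  also have "\<dots> = (om n ^ n) ^ (a div n) * om n ^ (a mod n)" by (simp only: power_add power_mult)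
  finally show ?thesis using om_pow_n[OF assms] by simp
qed

lemma om_pow_eq1: assumes "n > 0" "om n ^ e = 1" shows "n dvd e"
proof -
  have "exp (of_nat e * (2 * of_real pi * \<i> / of_nat n)) = 1"
    using assms(2) unfolding om_def by (simp only: exp_of_nat_mult)
  then obtain N :: int where N: "Im (of_nat e * (2 * of_real pi * \<i> / of_nat n)) = of_int (2 * N) * pi"
    by (auto simp: exp_eq_1)
  then have "real e * 2 * pi / real n = 2 * real_of_int N * pi" by simp
  then have "real e = real n * real_of_int N" using assms(1) by (simp add: field_simps)
  then have "int e = int n * N" by (metis of_int_eq_iff of_int_mult of_int_of_nat_eq)
  then show ?thesis by (metis dvd_triv_left int_dvd_int_iff)
qed

lemma om_sum: assumes "n > 0"
  shows "(\<Sum>m<n. om n ^ (m * e)) = (if n dvd e then of_nat n else 0)"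
proof (cases "n dvd e")
  case True
  then obtain q where "e = n * q" by blast
  then have "\<And>m. om n ^ (m * e) = 1" using om_pow_n[OF assms]
    by (metis mult.left_commute power_mult power_one)
  then show ?thesis using True by simp
next
  case False
  then have ne: "om n ^ e \<noteq> 1" using om_pow_eq1[OF assms] by blast
  have "(\<Sum>m<n. om n ^ (m * e)) = (\<Sum>m<n. (om n ^ e) ^ m)"
    by (intro sum.cong refl) (metis power_mult mult.commute)
  also have "\<dots> = ((om n ^ e) ^ n - 1) / (om n ^ e - 1)" using geometric_sum[OF ne] .
  also have "(om n ^ e) ^ n = 1" using om_pow_n[OF assms] by (metis power_mult mult.commute power_one)
  finally show ?thesis using False by simp
qed

lemma chi_mul: assumes "n > 0" shows "chi n m (nmul n x y) = chi n m x * chi n m y"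
proof -
  have key: "\<And>j l. om n ^ (m * ((j + l) mod n)) = om n ^ (m * j) * om n ^ (m * l)"
  proof -
    fix j l
    have "om n ^ (m * ((j + l) mod n)) = om n ^ ((m * ((j + l) mod n)) mod n)" using om_pow_mod[OF assms] .
    also have "(m * ((j + l) mod n)) mod n = (m * (j + l)) mod n" by (simp add: mod_mult_right_eq)
    also have "om n ^ \<dots> = om n ^ (m * (j + l))" using om_pow_mod[OF assms] by simp
    finally show "?thesis j l" by (simp add: algebra_simps power_add)
  qed
  have "chi n m (nmul n x y) = (\<Sum>k<n. (\<Sum>j<n. \<Sum>l<n. if (j + l) mod n = k then of_real (x j * y l) * om n ^ (m * k) else 0))"
    unfolding chi_def nmul_def by (intro sum.cong refl) (simp add: sum_distrib_right of_real_sum del: of_real_mult, intro sum.cong refl, simp)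
  also have "\<dots> = (\<Sum>j<n. \<Sum>l<n. \<Sum>k<n. if (j + l) mod n = k then of_real (x j * y l) * om n ^ (m * k) else 0)"
    by (subst sum.swap, rule sum.cong[OF refl], rule sum.swap)
  also have "\<dots> = (\<Sum>j<n. \<Sum>l<n. of_real (x j * y l) * om n ^ (m * ((j + l) mod n)))"
    by (intro sum.cong refl) (subst sum.delta'[OF finite_lessThan], simp only: lessThan_iff mod_less_divisor[OF assms] if_True)
  also have "\<dots> = (\<Sum>j<n. \<Sum>l<n. (of_real (x j) * om n ^ (m * j)) * (of_real (y l) * om n ^ (m * l)))"
    by (intro sum.cong refl) (simp only: key of_real_mult mult_ac)
  also have "\<dots> = chi n m x * chi n m y"
    unfolding chi_def sum_product by (rule refl)
  finally show ?thesis .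
qed

lemma chi_lin: "chi n m (\<lambda>i. x i + d * v i) = chi n m x + of_real d * chi n m v"
  unfolding chi_def by (simp add: sum.distrib sum_distrib_left algebra_simps)

lemma chi_sub: "chi n m (nsub n u w) = chi n m u - chi n m w"
  unfolding chi_def nsub_def by (simp add: sum_subtractf algebra_simps)

lemma chi_delta: "j < n \<Longrightarrow> chi n m (\<lambda>i. if i = j then 1 else 0) = om n ^ (m * j)"
  unfolding chi_def
  by (subst sum.cong[OF refl, of _ _ "\<lambda>i. if i = j then om n ^ (m*j) else 0"]) auto

lemma chi_upd: assumes "j < n"
  shows "chi n m (x(j := t)) = chi n m x + of_real (t - x j) * om n ^ (m * j)"
proof -
  have e: "x(j := t) = (\<lambda>i. x i + (t - x j) * (if i = j then 1 else 0))" by (rule ext) simp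
  have "chi n m (x(j := t)) = chi n m x + of_real (t - x j) * chi n m (\<lambda>i. if i = j then 1 else 0)"
    unfolding e by (rule chi_lin)
  also have "\<dots> = chi n m x + of_real (t - x j) * om n ^ (m * j)" by (simp only: chi_delta[OF assms])
  finally show ?thesis .
qed

lemma chi_none: "n > 0 \<Longrightarrow> chi n m (none n) = 1"
  unfolding none_def by (rule chi_delta[of 0 n m, simplified])

lemma chi_npow: "n > 0 \<Longrightarrow> chi n m (npow n w l) = chi n m w ^ l"
  by (induction l) (simp_all add: chi_none chi_mul)

lemma dvd_shift: fixes i n k :: nat assumes "i < n" "k < n" shows "n dvd (i + n - k) \<longleftrightarrow> i = k"
proof
  assume d: "n dvd (i + n - k)"
  show "i = k"
  proof (rule ccontr)
    assume "i \<noteq> k"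
    then have h: "0 < i + n - k" "i + n - k < 2 * n" "i + n - k \<noteq> n" using assms by auto
    obtain q where q: "i + n - k = n * q" using d by blast
    have "q = 0 \<or> q = 1 \<or> q \<ge> 2" by linarith
    then show False
    proof (elim disjE)
      assume "q = 0" then show False using h q by simp
    next
      assume "q = 1" then show False using h q by simp
    next
      assume "q \<ge> 2" then have "n * q \<ge> n * 2" by (rule mult_le_mono2)
      then show False using h q by linarith
    qed
  qed
qed simp

lemma chi_inv: assumes "k < n"
  shows "(\<Sum>m<n. chi n m x * om n ^ (m * (n - k))) = of_nat n * of_real (x k)"
proof -
  have n: "n > 0" using assms by simp
  have "(\<Sum>m<n. chi n m x * om n ^ (m * (n - k))) = (\<Sum>m<n. \<Sum>i<n. of_real (x i) * om n ^ (m * (i + n - k)))"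
    unfolding chi_def sum_distrib_right
  proof (intro sum.cong refl)
    fix m i
    have "i + n - k = i + (n - k)" using assms by simp
    then have "om n ^ (m * (i + n - k)) = om n ^ (m * i) * om n ^ (m * (n - k))"
      by (simp only: distrib_left power_add)
    then show "of_real (x i) * om n ^ (m * i) * om n ^ (m * (n - k)) = of_real (x i) * om n ^ (m * (i + n - k))"
      by (simp only: mult.assoc)
  qed
  also have "\<dots> = (\<Sum>i<n. of_real (x i) * (\<Sum>m<n. om n ^ (m * (i + n - k))))"
    by (subst sum.swap) (simp add: sum_distrib_left)
  also have "\<dots> = (\<Sum>i<n. if i = k then of_real (x i) * of_nat n else 0)"
  proof (intro sum.cong refl)
    fix i assume "i \<in> {..<n}"
    then have i: "i < n" by simp
    have e1: "(\<Sum>m<n. om n ^ (m * (i + n - k))) = (if n dvd (i + n - k) then of_nat n else 0)"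
      by (rule om_sum[OF n])
    have e2: "n dvd (i + n - k) \<longleftrightarrow> i = k" by (rule dvd_shift[OF i assms])
    show "of_real (x i) * (\<Sum>m<n. om n ^ (m * (i + n - k))) = (if i = k then of_real (x i) * of_nat n else 0)"
      unfolding e1 e2 by simp
  qed
  also have "\<dots> = of_nat n * of_real (x k)" using assms by simp
  finally show ?thesis .
qed

lemma norm_om: "norm (om n) = 1"
  unfolding om_def by (simp add: norm_exp_eq_Re)

lemma comp_le_nnorm: "i < n \<Longrightarrow> \<bar>x i\<bar> \<le> nnorm n x"
proof -
  assume i: "i < n"
  have "(x i)\<^sup>2 \<le> (\<Sum>i<n. (x i)\<^sup>2)" by (rule member_le_sum) (use i in auto)
  then have "sqrt ((x i)\<^sup>2) \<le> sqrt (\<Sum>i<n. (x i)\<^sup>2)" by (rule real_sqrt_le_mono)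
  then show ?thesis unfolding nnorm_def by simp
qed

lemma chi_bound: "norm (chi n m x) \<le> of_nat n * nnorm n x"
proof -
  have "norm (chi n m x) \<le> (\<Sum>i<n. norm (of_real (x i) * om n ^ (m * i)))"
    unfolding chi_def by (rule norm_sum)
  also have "\<dots> = (\<Sum>i<n. \<bar>x i\<bar>)" by (simp add: norm_mult norm_power norm_om)
  also have "\<dots> \<le> (\<Sum>i<n. nnorm n x)" by (intro sum_mono comp_le_nnorm) simp
  finally show ?thesis by simp
qed



lemma open_path:
  fixes p :: "real \<Rightarrow> (nat \<Rightarrow> real)"
  assumes "openin (top_of_set S) U" "p 0 \<in> U" "continuous_on UNIV p"
  shows "\<exists>e>0. \<forall>t. \<bar>t\<bar> < e \<longrightarrow> p t \<in> S \<longrightarrow> p t \<in> U"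
proof -
  obtain T where T: "open T" "U = S \<inter> T" using assms(1) unfolding openin_open by blast
  have "open (p -` T)" using open_vimage[OF T(1) assms(3)] .
  moreover have "0 \<in> p -` T" using assms(2) T(2) by blast
  ultimately obtain e where e: "e > 0" "ball 0 e \<subseteq> p -` T" by (meson openE)
  show ?thesis
  proof (intro exI[of _ e] conjI allI impI)
    fix t :: real assume "\<bar>t\<bar> < e" "p t \<in> S"
    then have "t \<in> ball 0 e" by simp
    then show "p t \<in> U" using e(2) T(2) \<open>p t \<in> S\<close> by blast
  qed (rule e(1))
qed

lemma pterm_chi: "n > 0 \<Longrightarrow> chi n m (pterm n a u0 y l) = chi n m (a l) * chi n m (nsub n y u0) ^ l"
  unfolding pterm_def by (simp add: chi_mul chi_npow)

lemma summ_chi: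
  assumes "n > 0" "summable (\<lambda>l. nnorm n (pterm n a u0 y l))"
  shows "summable (\<lambda>l. norm (chi n m (a l) * chi n m (nsub n y u0) ^ l))"
proof (rule summable_comparison_test'[where g = "\<lambda>l. of_nat n * nnorm n (pterm n a u0 y l)"])
  show "summable (\<lambda>l. of_nat n * nnorm n (pterm n a u0 y l))" using assms(2) by (rule summable_mult)
  fix l show "norm (norm (chi n m (a l) * chi n m (nsub n y u0) ^ l)) \<le> of_nat n * nnorm n (pterm n a u0 y l)"
    using chi_bound[of n m "pterm n a u0 y l"] pterm_chi[OF assms(1)] by simp
qed

lemma Pcomp_repr:
  assumes n: "n > 0" and sm: "summable (\<lambda>l. nnorm n (pterm n a u0 y l))" and k: "k < n"
  shows "of_real (Pcomp n a u0 k y) = (1 / of_nat n) * (\<Sum>m<n. om n ^ (m * (n - k)) *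
            (\<Sum>l. chi n m (a l) * chi n m (nsub n y u0) ^ l))"
proof -
  have s1: "summable (\<lambda>l. pterm n a u0 y l k)"
    by (rule summable_comparison_test'[OF sm]) (simp add: comp_le_nnorm k)
  have s2: "\<And>m. summable (\<lambda>l. om n ^ (m * (n - k)) * (chi n m (a l) * chi n m (nsub n y u0) ^ l))"
    by (rule summable_mult, rule summable_norm_cancel, rule summ_chi[OF n sm])
  have eq: "\<And>l. (of_real (pterm n a u0 y l k) :: complex) = (1 / of_nat n) * (\<Sum>m<n. om n ^ (m * (n - k)) *
            (chi n m (a l) * chi n m (nsub n y u0) ^ l))"
  proof -
    fix l
    have "(\<Sum>m<n. chi n m (pterm n a u0 y l) * om n ^ (m * (n - k))) = of_nat n * of_real (pterm n a u0 y l k)"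
      by (rule chi_inv[OF k])
    moreover have "(\<Sum>m<n. om n ^ (m * (n - k)) * (chi n m (a l) * chi n m (nsub n y u0) ^ l))
        = (\<Sum>m<n. chi n m (pterm n a u0 y l) * om n ^ (m * (n - k)))"
      by (rule sum.cong[OF refl]) (simp only: pterm_chi[OF n] mult.commute)
    ultimately have S: "(\<Sum>m<n. om n ^ (m * (n - k)) * (chi n m (a l) * chi n m (nsub n y u0) ^ l))
        = of_nat n * of_real (pterm n a u0 y l k)" by (simp only:)
    have nz: "(of_nat n :: complex) \<noteq> 0" using n by simp
    show "?thesis l" unfolding S using nz by simp
  qed
  have "of_real (Pcomp n a u0 k y) = (\<Sum>l. (of_real (pterm n a u0 y l k) :: complex))"
    unfolding Pcomp_def by (rule suminf_of_real[OF s1])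
  also have "\<dots> = (\<Sum>l. (1 / of_nat n) * (\<Sum>m<n. om n ^ (m * (n - k)) *
            (chi n m (a l) * chi n m (nsub n y u0) ^ l)))" by (simp only: eq)
  also have "\<dots> = (1 / of_nat n) * (\<Sum>l. (\<Sum>m<n. om n ^ (m * (n - k)) *
            (chi n m (a l) * chi n m (nsub n y u0) ^ l)))"
    by (rule suminf_mult, rule summable_sum, rule s2)
  also have "\<dots> = (1 / of_nat n) * (\<Sum>m<n. (\<Sum>l. om n ^ (m * (n - k)) *
            (chi n m (a l) * chi n m (nsub n y u0) ^ l)))"
    by (rule arg_cong[where f = "\<lambda>z. (1 / of_nat n) * z"], rule suminf_sum, rule s2)
  also have "\<dots> = (1 / of_nat n) * (\<Sum>m<n. om n ^ (m * (n - k)) *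
            (\<Sum>l. chi n m (a l) * chi n m (nsub n y u0) ^ l))"
  proof -
    have "\<And>m. (\<Sum>l. om n ^ (m * (n - k)) * (chi n m (a l) * chi n m (nsub n y u0) ^ l))
       = om n ^ (m * (n - k)) * (\<Sum>l. chi n m (a l) * chi n m (nsub n y u0) ^ l)"
      by (rule suminf_mult, rule summable_norm_cancel, rule summ_chi[OF n sm])
    then show ?thesis by (intro arg_cong[where f = "\<lambda>z. (1 / of_nat n) * z"] sum.cong refl)
  qed
  finally show ?thesis .
qed

lemma exp_shift: assumes "k < n" "j < n"
  shows "om n ^ (m * (n - (k + j) mod n)) * om n ^ (m * j) = om n ^ (m * (n - k))"
proof -
  have n: "n > 0" using assms by simp
  have e: "(n - (k + j) mod n + j) mod n = (n - k) mod n"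
  proof (cases "k + j < n")
    case True
    then have "(k + j) mod n = k + j" by (rule mod_less)
    moreover have "n - (k + j) + j = n - k" using True by linarith
    ultimately show ?thesis by (simp only:)
  next
    case False
    then have "k + j - n < n" using assms by linarith
    have "(k + j) mod n = (k + j - n) mod n" by (rule le_mod_geq) (use False in linarith)
    also have "\<dots> = k + j - n" using \<open>k + j - n < n\<close> by (rule mod_less)
    finally have "n - (k + j) mod n + j = (n - k) + n" using False assms by linarith
    then show ?thesis by (simp only: mod_add_self2)
  qed
  have "om n ^ (m * (n - (k + j) mod n)) * om n ^ (m * j) = om n ^ (m * (n - (k + j) mod n + j))"
    by (simp only: power_add distrib_left)
  also have "\<dots> = om n ^ ((m * (n - (k + j) mod n + j)) mod n)" by (rule om_pow_mod[OF n])
  also have "(m * (n - (k + j) mod n + j)) mod n = (m * (n - k)) mod n"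
  proof -
    have "(m * (n - (k + j) mod n + j)) mod n = (m * ((n - (k + j) mod n + j) mod n)) mod n"
      by (rule mod_mult_right_eq[symmetric])
    also have "\<dots> = (m * ((n - k) mod n)) mod n" by (simp only: e)
    also have "\<dots> = (m * (n - k)) mod n" by (rule mod_mult_right_eq)
    finally show ?thesis .
  qed
  also have "om n ^ \<dots> = om n ^ (m * (n - k))" by (rule om_pow_mod[OF n, symmetric])
  finally show ?thesis .
qed



lemma claimA:
  fixes n :: nat and a :: "nat \<Rightarrow> nat \<Rightarrow> real" and u0 :: "nat \<Rightarrow> real"
    and U :: "(nat \<Rightarrow> real) set"
  assumes n: "n \<ge> 2"
    and u0: "u0 \<in> ncx n"
    and Usub: "U \<subseteq> ncx n"
    and op: "openin (top_of_set (ncx n)) U"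
    and sm: "\<And>u. u \<in> U \<Longrightarrow> summable (\<lambda>l. nnorm n (pterm n a u0 u l))"
    and xU: "x \<in> U"
  shows "\<exists>r. norm (chi n m (nsub n x u0)) < r \<and> summable (\<lambda>l. norm (chi n m (a l)) * r ^ l)"
proof -
  have n0: "n > 0" using n by simp
  define z where "z = chi n m (nsub n x u0)"
  define v where "v = (if z \<noteq> 0 then nsub n x u0 else none n)"
  have x: "x \<in> ncx n" using xU Usub by auto
  have v: "v \<in> ncx n" using n unfolding v_def ncx_def nsub_def none_def by auto
  define p where "p = (\<lambda>d::real. (\<lambda>i. x i + d * v i))"
  have pS: "\<And>d. p d \<in> ncx n" using x v unfolding p_def ncx_def by auto
  have p0: "p 0 \<in> U" using xU unfolding p_def by simp
  have pc: "continuous_on UNIV p" unfolding p_def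
    by (intro continuous_on_coordinatewise_then_product continuous_intros)
  obtain e where e: "e > 0" "\<And>t. \<bar>t\<bar> < e \<Longrightarrow> p t \<in> U"
    using open_path[OF op p0 pc] pS by blast
  define d where "d = e / 2"
  have d: "d > 0" "\<bar>d\<bar> < e" using e(1) unfolding d_def by auto
  have yU: "p d \<in> U" using e(2)[OF d(2)] .
  have cz: "chi n m (nsub n (p d) u0) = z + of_real d * chi n m v"
    unfolding p_def z_def by (simp add: chi_sub chi_lin algebra_simps)
  have gt: "norm z < norm (chi n m (nsub n (p d) u0))"
  proof (cases "z = 0")
    case True
    then have "chi n m v = 1" unfolding v_def using chi_none[OF n0] by simp
    then show ?thesis using True cz d by simp
  next
    case False
    then have "chi n m (nsub n (p d) u0) = (1 + of_real d) * z" using cz unfolding v_def z_def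
      by (simp add: algebra_simps)
    moreover have "(1 + of_real d :: complex) = of_real (1 + d)" by simp
    ultimately have "chi n m (nsub n (p d) u0) = of_real (1 + d) * z" by metis
    then have "norm (chi n m (nsub n (p d) u0)) = (1 + d) * norm z"
      using d by (simp only: norm_mult norm_of_real)
    then show ?thesis using False d by simp
  qed
  show ?thesis
  proof (intro exI conjI)
    show "norm (chi n m (nsub n x u0)) < norm (chi n m (nsub n (p d) u0))" using gt z_def by simp
    show "summable (\<lambda>l. norm (chi n m (a l)) * norm (chi n m (nsub n (p d) u0)) ^ l)"
      using summ_chi[OF n0 sm[OF yU], of m] by (simp add: norm_mult norm_power)
  qed
qed

theorem mainTheorem15:
  fixes n :: nat and a :: "nat \<Rightarrow> nat \<Rightarrow> real" and u0 :: "nat \<Rightarrow> real"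
    and U :: "(nat \<Rightarrow> real) set"
  assumes "n \<ge> 2"
    and "\<And>l. a l \<in> ncx n"
    and "u0 \<in> ncx n"
    and "U \<subseteq> ncx n"
    and "openin (top_of_set (ncx n)) U"
    and "\<And>u. u \<in> U \<Longrightarrow> summable (\<lambda>l. nnorm n (pterm n a u0 u l))"
  shows "\<forall>x\<in>U. \<forall>k<n. \<exists>D. \<forall>j<n.
           ((\<lambda>t. Pcomp n a u0 ((k + j) mod n) (x(j := t))) has_real_derivative D) (at (x j))"
proof (intro ballI allI impI)
  fix x k assume xU: "x \<in> U" and k: "k < n"
  have n0: "n > 0" using assms(1) by simp
  define z where "z m = chi n m (nsub n x u0)" for m
  define c where "c m l = chi n m (a l)" for m l
  define g where "g m \<zeta> = (\<Sum>l. c m l * \<zeta> ^ l)" for m \<zeta>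
  define g' where "g' m = (\<Sum>l. diffs (c m) l * z m ^ l)" for m
  have gd: "DERIV (g m) (z m) :> g' m" for m
  proof -
    obtain r where r: "norm (z m) < r" "summable (\<lambda>l. norm (c m l) * r ^ l)"
      using claimA[OF assms(1,3,4,5,6) xU, of m] unfolding z_def c_def by blast
    have r0: "r \<ge> 0" using r(1) norm_ge_zero[of "z m"] by linarith
    have "summable (\<lambda>l. c m l * of_real r ^ l)"
      by (rule summable_norm_cancel) (use r(2) r0 in \<open>simp add: norm_mult norm_power\<close>)
    moreover have "norm (z m) < norm (of_real r :: complex)" using r r0 by simp
    ultimately show ?thesis unfolding g_def g'_def by (rule termdiffs_strong)
  qed
  define DC where "DC = (1 / of_nat n) * (\<Sum>m<n. om n ^ (m * (n - k)) * g' m)"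
  show "\<exists>D. \<forall>j<n. ((\<lambda>t. Pcomp n a u0 ((k + j) mod n) (x(j := t))) has_real_derivative D) (at (x j))"
  proof (intro exI allI impI)
    fix j assume j: "j < n"
    define k' where "k' = (k + j) mod n"
    have k': "k' < n" unfolding k'_def using n0 by simp
    define G where "G s = (1 / of_nat n) * (\<Sum>m<n. om n ^ (m * (n - k')) *
        g m (z m + (s - of_real (x j)) * om n ^ (m * j)))" for s
    have inner: "DERIV (\<lambda>s. g m (z m + (s - of_real (x j)) * om n ^ (m * j))) (of_real (x j)) :> g' m * om n ^ (m * j)" for m
    proof (rule DERIV_chain2[where f = "g m"])
      show "DERIV (g m) (z m + (of_real (x j) - of_real (x j)) * om n ^ (m * j)) :> g' m" using gd by simp
      show "((\<lambda>s. z m + (s - of_real (x j)) * om n ^ (m * j)) has_field_derivative om n ^ (m * j)) (at (of_real (x j)))"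
        by (auto intro!: derivative_eq_intros)
    qed
    have GD: "DERIV G (of_real (x j)) :> DC"
    proof -
      have "DERIV G (of_real (x j)) :> (1 / of_nat n) * (\<Sum>m<n. om n ^ (m * (n - k')) * (g' m * om n ^ (m * j)))"
        unfolding G_def by (intro DERIV_cmult DERIV_sum inner)
      moreover have "(\<Sum>m<n. om n ^ (m * (n - k')) * (g' m * om n ^ (m * j))) = (\<Sum>m<n. om n ^ (m * (n - k)) * g' m)"
      proof (intro sum.cong refl)
        fix m
        have "om n ^ (m * (n - k')) * om n ^ (m * j) = om n ^ (m * (n - k))"
          unfolding k'_def by (rule exp_shift[OF k j])
        then show "om n ^ (m * (n - k')) * (g' m * om n ^ (m * j)) = om n ^ (m * (n - k)) * g' m"
          by (metis mult.assoc mult.commute)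
      qed
      ultimately show ?thesis unfolding DC_def by simp
    qed
    have RD: "((\<lambda>t. Re (G (of_real t))) has_real_derivative Re DC) (at (x j))"
      by (rule has_field_derivative_Re, rule has_vector_derivative_real_field, rule GD)
    define p where "p = (\<lambda>t::real. x(j := x j + t))"
    have x: "x \<in> ncx n" using xU assms(4) by auto
    have pS: "\<And>t. p t \<in> ncx n" using x j unfolding p_def ncx_def by auto
    have p0: "p 0 \<in> U" using xU unfolding p_def by simp
    have pc: "continuous_on UNIV p" unfolding p_def
    proof (intro continuous_on_coordinatewise_then_product)
      fix i show "continuous_on UNIV (\<lambda>t. (x(j := x j + t)) i)"
        by (cases "i = j") (simp_all add: continuous_intros)
    qed
    obtain e where e: "e > 0" "\<And>t. \<bar>t\<bar> < e \<Longrightarrow> p t \<in> U"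
      using open_path[OF assms(5) p0 pc] pS by blast
    have eq: "Re (G (of_real t)) = Pcomp n a u0 k' (x(j := t))" if "dist t (x j) < e" for t
    proof -
      have "p (t - x j) \<in> U" using e(2) that by (simp add: dist_real_def)
      then have yU: "x(j := t) \<in> U" unfolding p_def by simp
      have "of_real (Pcomp n a u0 k' (x(j := t))) = (1 / of_nat n) * (\<Sum>m<n. om n ^ (m * (n - k')) *
            (\<Sum>l. chi n m (a l) * chi n m (nsub n (x(j := t)) u0) ^ l))"
        by (rule Pcomp_repr[OF n0 assms(6)[OF yU] k'])
      also have "\<dots> = G (of_real t)"
        unfolding G_def g_def c_def z_def
        by (simp add: chi_sub chi_upd[OF j] algebra_simps)
      finally show ?thesis by (metis Re_complex_of_real)
    qed
    show "((\<lambda>t. Pcomp n a u0 ((k + j) mod n) (x(j := t))) has_real_derivative Re DC) (at (x j))"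
      unfolding k'_def[symmetric]
      by (rule has_field_derivative_transform_within[OF RD e(1)]) (use eq in auto)
  qed
qed

end
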